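(* Let $X$ be a compact Hausdorff space and $A\subset X$ a nonempty finite subset. Then $\pi_n^M(X,A)=0$ for all $n>0$.
   Context: A continuous multivalued map $X\to Y$ is a subset $T\subset X\times Y$ such that the restriction of the projection $X\times Y\to X$ to $T$ is proper (universally closed), surjective and has finite fibers; $M(X,Y)$ is the set of these. $S_*^M(X)$ is the simplicial set with $S_n^M(X)=M(\Delta_n,X)$ ($\Delta_n$ the standard topological $n$-simplex), with face and degeneracy maps $\alpha\mapsto\alpha\circ\mathrm{gr}(f)=\{(s,x):(f(s),x)\in\alpha\}$ for $f$ the standard coface and codegeneracy maps; it is a Kan complex. Elements of $S_0^M(X)$ are identified with nonempty finite subsets of $X$. The multivalued homotopy groups are $\pi_n^M(X,A)=\pi_n(S_*^M(X),A)$, the simplicial homotopy groups at the vertex $A$. *)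

theory Defs
  imports "HOL-Analysis.Analysis" "HOL-Homology.Homology"
begin

abbreviation simplex_top :: "nat \<Rightarrow> (nat \<Rightarrow> real) topology" where
  "simplex_top n \<equiv> subtopology (powertop_real UNIV) (standard_simplex n)"

text \<open>Continuous multivalued maps from a space S to X: subsets T of S x X such that
  the projection T -> S is proper (universally closed), surjective, with finite fibres.\<close>
definition mv_maps :: "'b topology \<Rightarrow> 'a topology \<Rightarrow> ('b \<times> 'a) set set" where
  "mv_maps S X = {T. T \<subseteq> topspace S \<times> topspace X
      \<and> proper_map (subtopology (prod_topology S X) T) S fst
      \<and> fst ` T = topspace S
      \<and> (\<forall>s \<in> topspace S. finite {x. (s, x) \<in> T})}"

definition mv_simplices :: "'a topology \<Rightarrow> nat \<Rightarrow> ((nat \<Rightarrow> real) \<times> 'a) set set" where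
  "mv_simplices X n = mv_maps (simplex_top n) X"

definition mv_precomp :: "nat \<Rightarrow> ((nat \<Rightarrow> real) \<Rightarrow> (nat \<Rightarrow> real)) \<Rightarrow> ((nat \<Rightarrow> real) \<times> 'a) set
    \<Rightarrow> ((nat \<Rightarrow> real) \<times> 'a) set" where
  "mv_precomp m f \<alpha> = {(s, x). s \<in> standard_simplex m \<and> (f s, x) \<in> \<alpha>}"

definition mv_face :: "nat \<Rightarrow> nat \<Rightarrow> ((nat \<Rightarrow> real) \<times> 'a) set \<Rightarrow> ((nat \<Rightarrow> real) \<times> 'a) set" where
  "mv_face n i \<alpha> = mv_precomp (n - 1) (simplical_face i) \<alpha>"

text \<open>The vertex A (a nonempty finite subset of X, i.e. an element of M(Delta_0,X))
  viewed as the totally degenerate n-simplex: Delta_n x A (= A o gr(const)).\<close>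
definition mv_const :: "nat \<Rightarrow> 'a set \<Rightarrow> ((nat \<Rightarrow> real) \<times> 'a) set" where
  "mv_const n A = standard_simplex n \<times> A"

text \<open>Simplicial homotopy groups of the Kan complex S^M_*(X) at the vertex A
  (combinatorial definition, valid for Kan complexes): n-simplices all of whose faces
  are the degenerate base point, modulo simplicial homotopy rel boundary.\<close>
definition mv_spheres :: "'a topology \<Rightarrow> 'a set \<Rightarrow> nat \<Rightarrow> ((nat \<Rightarrow> real) \<times> 'a) set set" where
  "mv_spheres X A n = {x \<in> mv_simplices X n. \<forall>i\<le>n. mv_face n i x = mv_const (n - 1) A}"

definition mv_homotopic :: "'a topology \<Rightarrow> 'a set \<Rightarrow> nat \<Rightarrow> ((nat \<Rightarrow> real) \<times> 'a) set
    \<Rightarrow> ((nat \<Rightarrow> real) \<times> 'a) set \<Rightarrow> bool" where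
  "mv_homotopic X A n x x' \<longleftrightarrow>
     (\<exists>y \<in> mv_simplices X (Suc n).
        mv_face (Suc n) n y = x \<and> mv_face (Suc n) (Suc n) y = x'
        \<and> (\<forall>i<n. mv_face (Suc n) i y = mv_const n A))"

definition mv_homotopy_group :: "'a topology \<Rightarrow> 'a set \<Rightarrow> nat \<Rightarrow> ((nat \<Rightarrow> real) \<times> 'a) set set set" where
  "mv_homotopy_group X A n =
     mv_spheres X A n // {(x, x'). x \<in> mv_spheres X A n \<and> x' \<in> mv_spheres X A n
                                  \<and> mv_homotopic X A n x x'}"

end

theory Submission
  imports Defs
begin

lemma proper_imp_closed_graph:
  assumes H: "Hausdorff_space X" and T: "T \<subseteq> topspace S \<times> topspace X"
    and P: "proper_map (subtopology (prod_topology S X) T) S fst"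
    and F: "\<And>s. s \<in> topspace S \<Longrightarrow> finite {x. (s, x) \<in> T}"
  shows "closedin (prod_topology S X) T"
proof -
  have "openin (prod_topology S X) (topspace (prod_topology S X) - T)"
  proof (subst openin_subopen, intro ballI)
    fix p assume p: "p \<in> topspace (prod_topology S X) - T"
    obtain s z where pz: "p = (s, z)" by force
    have s: "s \<in> topspace S" and z: "z \<in> topspace X" and nT: "(s,z) \<notin> T" using p pz by auto
    define Fs where "Fs = {x. (s, x) \<in> T}"
    have "finite Fs" using F s Fs_def by auto
    moreover have "Fs \<subseteq> topspace X" using T Fs_def by auto
    ultimately have cF: "compactin X Fs" by (simp add: finite_imp_compactin)
    have "disjnt {z} Fs" using nT Fs_def by auto
    then obtain U V where U: "openin X U" and V: "openin X V" and zU: "{z} \<subseteq> U" and FV: "Fs \<subseteq> V" and UV: "disjnt U V"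
      using Hausdorff_space_compact_separation[OF H _ cF] z by (metis compactin_sing)
    define C where "C = T \<inter> (topspace S \<times> (topspace X - V))"
    have "closedin (prod_topology S X) (topspace S \<times> (topspace X - V))"
      using V by (simp add: closedin_prod_Times_iff closedin_diff)
    then have "closedin (subtopology (prod_topology S X) T) C"
      unfolding C_def by (simp add: closedin_subtopology_Int_closed inf_commute)
    then have cl: "closedin S (fst ` C)" using P by (simp add: proper_map_def closed_map_def)
    have sC: "s \<notin> fst ` C" using FV Fs_def C_def by auto
    define W where "W = topspace S - fst ` C"
    have W: "openin S W" using cl W_def by auto
    have "(s, z) \<in> W \<times> U" using s sC zU W_def by auto
    moreover have "openin (prod_topology S X) (W \<times> U)" using W U by (simp add: openin_prod_Times_iff)
    moreover have "W \<times> U \<subseteq> topspace (prod_topology S X) - T"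
    proof
      fix q assume q: "q \<in> W \<times> U"
      then obtain a b where ab: "q = (a,b)" "a \<in> W" "b \<in> U" by auto
      have "b \<in> topspace X" using U ab openin_subset by blast
      moreover have "b \<notin> V" using UV ab by (auto simp: disjnt_def)
      ultimately have "(a,b) \<notin> T" using ab W_def C_def by force
      then show "q \<in> topspace (prod_topology S X) - T" using ab W_def \<open>b \<in> topspace X\<close> by auto
    qed
    ultimately show "\<exists>T'. openin (prod_topology S X) T' \<and> p \<in> T' \<and> T' \<subseteq> topspace (prod_topology S X) - T"
      using pz by blast
  qed
  then show ?thesis using T by (simp add: closedin_def)
qed

lemma closed_graph_imp_proper:
  assumes K: "compact_space X" and C: "closedin (prod_topology S X) T"
    and F: "\<And>s. s \<in> topspace S \<Longrightarrow> finite {x. (s, x) \<in> T}"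
  shows "proper_map (subtopology (prod_topology S X) T) S fst"
  unfolding proper_map_def
proof (intro conjI ballI)
  have "closed_map (subtopology (prod_topology S X) T) (prod_topology S X) id"
    using C closed_map_inclusion_eq closedin_subset by (metis inf.absorb_iff2)
  then have "closed_map (subtopology (prod_topology S X) T) S (fst \<circ> id)"
    using closed_map_compose closed_map_fst[OF K] by blast
  then show "closed_map (subtopology (prod_topology S X) T) S fst" by simp
  fix s assume s: "s \<in> topspace S"
  have T: "T \<subseteq> topspace S \<times> topspace X" using C closedin_subset by force
  have eq: "{p \<in> topspace (subtopology (prod_topology S X) T). fst p = s} = (\<lambda>x. (s,x)) ` {x. (s, x) \<in> T}"
    using T by auto
  show "compactin (subtopology (prod_topology S X) T) {p \<in> topspace (subtopology (prod_topology S X) T). fst p = s}"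
    apply (rule finite_imp_compactin)
    using eq F[OF s] by auto
qed

definition sg :: "nat \<Rightarrow> (nat \<Rightarrow> real) \<Rightarrow> (nat \<Rightarrow> real)" where
  "sg n s = (\<lambda>j. if j < n then s j else if j = n then s n + s (Suc n) else 0)"

lemma sg_in:
  assumes "s \<in> standard_simplex (Suc n)"
  shows "sg n s \<in> standard_simplex n"
proof -
  have nn: "\<And>i. 0 \<le> s i" and s1: "\<And>i. s i \<le> 1" and z: "\<And>i. i > Suc n \<Longrightarrow> s i = 0"
    and su: "(\<Sum>i\<le>Suc n. s i) = 1"
    using assms by (auto simp: standard_simplex_def)
  have e: "(\<Sum>i\<le>Suc n. s i) = (\<Sum>i<n. s i) + s n + s (Suc n)"
    by (simp add: sum.atMost_Suc lessThan_Suc_atMost[symmetric] sum.lessThan_Suc)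
  have "(\<Sum>i\<le>n. sg n s i) = (\<Sum>i<n. sg n s i) + sg n s n"
    by (simp add: lessThan_Suc_atMost[symmetric] sum.lessThan_Suc)
  also have "(\<Sum>i<n. sg n s i) = (\<Sum>i<n. s i)" by (rule sum.cong) (auto simp: sg_def)
  finally have "(\<Sum>i\<le>n. sg n s i) = 1" using e su by (simp add: sg_def)
  moreover have "0 \<le> (\<Sum>i<n. s i)" by (simp add: nn sum_nonneg)
  ultimately show ?thesis using nn s1 z e su
    by (auto simp: standard_simplex_def sg_def)
qed

lemma sg_face_n:
  assumes "t \<in> standard_simplex n"
  shows "sg n (simplical_face n t) = t"
  using assms by (auto simp: sg_def simplical_face_def standard_simplex_def)

lemma sg_face_Sn:
  assumes "t \<in> standard_simplex n"
  shows "sg n (simplical_face (Suc n) t) = t"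
  using assms by (auto simp: sg_def simplical_face_def standard_simplex_def)

lemma sg_cont: "continuous_map (simplex_top (Suc n)) (simplex_top n) (sg n)"
proof (clarsimp simp add: continuous_map_in_subtopology sg_in continuous_map_componentwise Pi_iff)
  fix i
  have "continuous_map (powertop_real UNIV) euclideanreal (\<lambda>x. if i < n then x i else if i = n then x n + x (Suc n) else 0)"
    by (auto intro!: continuous_map_product_projection continuous_map_add)
  then show "continuous_map (simplex_top (Suc n)) euclideanreal (\<lambda>x. sg n x i)"
    by (simp add: sg_def continuous_map_from_subtopology)
qed

lemma zero_coord_face:
  assumes t: "t \<in> standard_simplex n" and i: "i \<le> n" and n: "n > 0" and ti: "t i = 0"
  obtains u where "u \<in> standard_simplex (n - 1)" "simplical_face i u = t"
proof -
  define g where "g = (\<lambda>j::nat. if j < i then j else Suc j)"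
  define u where "u = t \<circ> g"
  have inj: "inj_on g {..n-1}" by (auto simp: g_def inj_on_def)
  have img: "g ` {..n-1} = {..n} - {i}"
  proof
    show "g ` {..n-1} \<subseteq> {..n} - {i}" using i n by (auto simp: g_def)
    show "{..n} - {i} \<subseteq> g ` {..n-1}"
    proof
      fix j assume j: "j \<in> {..n} - {i}"
      show "j \<in> g ` {..n-1}"
      proof (cases "j < i")
        case True then show ?thesis using j i unfolding g_def by (auto intro!: image_eqI[of _ _ j])
      next
        case False then have "j = g (j - 1)" "j - 1 \<in> {..n-1}" using j by (auto simp: g_def)
        then show ?thesis by blast
      qed
    qed
  qed
  have "(\<Sum>j\<le>n-1. u j) = sum t (g ` {..n-1})" using sum.reindex[OF inj, of t] by (simp add: u_def)
  also have "\<dots> = sum t ({..n} - {i})" using img by simp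
  also have "\<dots> = sum t {..n}" using ti i by (simp add: sum_diff1)
  also have "\<dots> = 1" using t by (simp add: standard_simplex_def)
  finally have "(\<Sum>j\<le>n-1. u j) = 1" .
  then have "u \<in> standard_simplex (n - 1)" using t i
    by (auto simp: standard_simplex_def u_def g_def)
  moreover have "simplical_face i u = t"
    using ti by (auto simp: simplical_face_def u_def g_def fun_eq_iff)
  ultimately show ?thesis using that by blast
qed

lemma sphere_zero:
  assumes x: "x \<in> mv_spheres X A n" and n: "n > 0" and t: "t \<in> standard_simplex n"
    and i: "i \<le> n" and ti: "t i = 0"
  shows "(t, z) \<in> x \<longleftrightarrow> z \<in> A"
proof -
  obtain u where u: "u \<in> standard_simplex (n - 1)" and tu: "simplical_face i u = t"
    using zero_coord_face[OF t i n ti] by blast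
  have "mv_face n i x = mv_const (n - 1) A" using x i by (simp add: mv_spheres_def)
  then have "(u, z) \<in> mv_precomp (n - 1) (simplical_face i) x \<longleftrightarrow> (u, z) \<in> standard_simplex (n - 1) \<times> A"
    by (simp add: mv_face_def mv_const_def)
  then show ?thesis using u tu by (simp add: mv_precomp_def)
qed

lemma simplices_closed:
  assumes H: "Hausdorff_space X" and x: "x \<in> mv_simplices X n"
  shows "closedin (prod_topology (simplex_top n) X) x"
  using x proper_imp_closed_graph[OF H, of x "simplex_top n"]
  by (auto simp: mv_simplices_def mv_maps_def)

lemma simplices_sub:
  assumes x: "x \<in> mv_simplices X n"
  shows "x \<subseteq> standard_simplex n \<times> topspace X"
    "\<And>t. t \<in> standard_simplex n \<Longrightarrow> finite {z. (t, z) \<in> x}"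
    "\<And>t. t \<in> standard_simplex n \<Longrightarrow> \<exists>z. (t, z) \<in> x"
  using x apply (auto simp: mv_simplices_def mv_maps_def)
  by (metis (no_types, lifting) image_iff prod.collapse)

lemma homotopic_all:
  assumes K: "compact_space X" and H: "Hausdorff_space X" and n: "n > 0"
    and x: "x \<in> mv_spheres X A n" and x': "x' \<in> mv_spheres X A n"
  shows "mv_homotopic X A n x x'"
proof -
  have xs: "x \<in> mv_simplices X n" and xs': "x' \<in> mv_simplices X n"
    using x x' by (auto simp: mv_spheres_def)
  define y where "y = {(s, z). s \<in> standard_simplex (Suc n) \<and> s (Suc n) \<le> s n \<and> (sg n s, z) \<in> x'}
     \<union> {(s, z). s \<in> standard_simplex (Suc n) \<and> s n \<le> s (Suc n) \<and> (sg n s, z) \<in> x}"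
  let ?P = "prod_topology (simplex_top (Suc n)) X"
  let ?Q = "prod_topology (simplex_top n) X"
  have cf: "continuous_map ?P ?Q (\<lambda>p. (sg n (fst p), snd p))"
    by (intro continuous_map_pairedI continuous_map_compose[OF continuous_map_fst sg_cont, unfolded o_def] continuous_map_snd)
  have cproj: "continuous_map ?P euclideanreal (\<lambda>p. fst p k)" for k
    by (rule continuous_map_compose[OF continuous_map_fst, unfolded o_def])
       (intro continuous_map_from_subtopology continuous_map_product_projection; simp)
  have c1: "closedin ?P {p \<in> topspace ?P. fst p n - fst p (Suc n) \<in> {0..}}"
    by (rule closedin_continuous_map_preimage[where Y=euclideanreal]) (auto intro!: continuous_map_diff cproj)
  have c2: "closedin ?P {p \<in> topspace ?P. fst p (Suc n) - fst p n \<in> {0..}}"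
    by (rule closedin_continuous_map_preimage[where Y=euclideanreal]) (auto intro!: continuous_map_diff cproj)
  have c3: "closedin ?P {p \<in> topspace ?P. (sg n (fst p), snd p) \<in> x'}"
    by (intro closedin_continuous_map_preimage[OF cf] simplices_closed[OF H xs'])
  have c4: "closedin ?P {p \<in> topspace ?P. (sg n (fst p), snd p) \<in> x}"
    by (intro closedin_continuous_map_preimage[OF cf] simplices_closed[OF H xs])
  have yeq: "y = ({p \<in> topspace ?P. fst p n - fst p (Suc n) \<in> {0..}} \<inter> {p \<in> topspace ?P. (sg n (fst p), snd p) \<in> x'})
     \<union> ({p \<in> topspace ?P. fst p (Suc n) - fst p n \<in> {0..}} \<inter> {p \<in> topspace ?P. (sg n (fst p), snd p) \<in> x})"
    using simplices_sub(1)[OF xs] simplices_sub(1)[OF xs'] unfolding y_def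
    by (auto dest: sg_in)
  have cy: "closedin ?P y" unfolding yeq using c1 c2 c3 c4 by blast
  have fin: "finite {z. (s, z) \<in> y}" if s: "s \<in> standard_simplex (Suc n)" for s
  proof -
    have "{z. (s, z) \<in> y} \<subseteq> {z. (sg n s, z) \<in> x'} \<union> {z. (sg n s, z) \<in> x}"
      unfolding y_def by auto
    then show ?thesis using simplices_sub(2)[OF xs, OF sg_in[OF s]] simplices_sub(2)[OF xs', OF sg_in[OF s]]
      by (meson finite_UnI finite_subset)
  qed
  have ysub: "y \<subseteq> standard_simplex (Suc n) \<times> topspace X"
    using simplices_sub(1)[OF xs] simplices_sub(1)[OF xs'] unfolding y_def by auto
  have fsty: "fst ` y = standard_simplex (Suc n)"
  proof
    show "fst ` y \<subseteq> standard_simplex (Suc n)" using ysub by auto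
    show "standard_simplex (Suc n) \<subseteq> fst ` y"
    proof
      fix s assume s: "s \<in> standard_simplex (Suc n)"
      obtain z where z: "(sg n s, z) \<in> x" using simplices_sub(3)[OF xs sg_in[OF s]] by blast
      obtain z' where z': "(sg n s, z') \<in> x'" using simplices_sub(3)[OF xs' sg_in[OF s]] by blast
      show "s \<in> fst ` y"
      proof (cases "s (Suc n) \<le> s n")
        case True then have "(s, z') \<in> y" using s z' by (simp add: y_def)
        then show ?thesis by force
      next
        case False then have "(s, z) \<in> y" using s z by (simp add: y_def)
        then show ?thesis by force
      qed
    qed
  qed
  have ymv: "y \<in> mv_simplices X (Suc n)"
    unfolding mv_simplices_def mv_maps_def
    using ysub fsty fin closed_graph_imp_proper[OF K cy] by auto
  have face_in: "simplical_face i t \<in> standard_simplex (Suc n)" if "i \<le> Suc n" "t \<in> standard_simplex n" for i t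
    using simplical_face_in_standard_simplex[of "Suc n" i t] that by simp
  have sx: "(t, z) \<in> x \<longleftrightarrow> z \<in> A" "(t, z) \<in> x' \<longleftrightarrow> z \<in> A"
    if "t \<in> standard_simplex n" "i \<le> n" "t i = 0" for t z i
    using sphere_zero[OF x n that] sphere_zero[OF x' n that] by auto
  have "mv_face (Suc n) n y = x"
  proof -
    have "(t, z) \<in> mv_face (Suc n) n y \<longleftrightarrow> (t, z) \<in> x" for t z
    proof (cases "t \<in> standard_simplex n")
      case True
      have tn: "t n \<ge> 0" using True by (simp add: standard_simplex_def)
      have "(simplical_face n t) n = 0" "(simplical_face n t) (Suc n) = t n"
        by (auto simp: simplical_face_def)
      then show ?thesis using True face_in[of n t] sg_face_n[OF True] tn sx[OF True, of n]
        by (auto simp: mv_face_def mv_precomp_def y_def)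
    next
      case False then show ?thesis using simplices_sub(1)[OF xs] by (auto simp: mv_face_def mv_precomp_def)
    qed
    then show ?thesis by auto
  qed
  moreover have "mv_face (Suc n) (Suc n) y = x'"
  proof -
    have "(t, z) \<in> mv_face (Suc n) (Suc n) y \<longleftrightarrow> (t, z) \<in> x'" for t z
    proof (cases "t \<in> standard_simplex n")
      case True
      have tn: "t n \<ge> 0" using True by (simp add: standard_simplex_def)
      have "(simplical_face (Suc n) t) n = t n" "(simplical_face (Suc n) t) (Suc n) = 0"
        by (auto simp: simplical_face_def)
      then show ?thesis using True face_in[of "Suc n" t] sg_face_Sn[OF True] tn sx[OF True, of n]
        by (auto simp: mv_face_def mv_precomp_def y_def)
    next
      case False then show ?thesis using simplices_sub(1)[OF xs'] by (auto simp: mv_face_def mv_precomp_def)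
    qed
    then show ?thesis by auto
  qed
  moreover have "\<forall>i<n. mv_face (Suc n) i y = mv_const n A"
  proof (intro allI impI)
    fix i assume i: "i < n"
    have "(t, z) \<in> mv_face (Suc n) i y \<longleftrightarrow> (t, z) \<in> mv_const n A" for t z
    proof (cases "t \<in> standard_simplex n")
      case True
      have fi: "simplical_face i t \<in> standard_simplex (Suc n)" using face_in[of i t] True i by simp
      have si: "sg n (simplical_face i t) \<in> standard_simplex n" using sg_in[OF fi] .
      have "sg n (simplical_face i t) i = 0" using i by (simp add: sg_def simplical_face_def)
      then have "(sg n (simplical_face i t), z) \<in> x \<longleftrightarrow> z \<in> A" "(sg n (simplical_face i t), z) \<in> x' \<longleftrightarrow> z \<in> A"
        using sx[OF si, of i z] i by auto
      then show ?thesis using True fi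
        by (auto simp: mv_face_def mv_precomp_def y_def mv_const_def)
    next
      case False then show ?thesis by (auto simp: mv_face_def mv_precomp_def mv_const_def)
    qed
    then show "mv_face (Suc n) i y = mv_const n A" by auto
  qed
  ultimately show ?thesis unfolding mv_homotopic_def using ymv by blast
qed

lemma const_sphere:
  assumes K: "compact_space X" and H: "Hausdorff_space X" and A: "A \<subseteq> topspace X" "finite A" "A \<noteq> {}"
    and n: "n > 0"
  shows "mv_const n A \<in> mv_spheres X A n"
proof -
  have cA: "closedin X A" using A Hausdorff_imp_t1_space[OF H] t1_space_closedin_finite by blast
  have cl: "closedin (prod_topology (simplex_top n) X) (mv_const n A)"
    unfolding mv_const_def using cA by (simp add: closedin_prod_Times_iff)
  have fin: "finite {z. (s, z) \<in> mv_const n A}" for s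
    using A by (auto simp: mv_const_def intro: finite_subset[of _ A])
  have "mv_const n A \<in> mv_simplices X n"
    unfolding mv_simplices_def mv_maps_def
    using closed_graph_imp_proper[OF K cl] fin A by (auto simp: mv_const_def)
  moreover have "mv_face n i (mv_const n A) = mv_const (n - 1) A" if "i \<le> n" for i
    using simplical_face_in_standard_simplex[of n i] that n
    by (auto simp: mv_face_def mv_precomp_def mv_const_def)
  ultimately show ?thesis by (simp add: mv_spheres_def)
qed

theorem mainTheorem11:
  fixes X :: "'a topology" and A :: "'a set" and n :: nat
  assumes "compact_space X" and "Hausdorff_space X"
    and "A \<subseteq> topspace X" and "finite A" and "A \<noteq> {}"
    and "n > 0"
  shows "\<exists>c. mv_homotopy_group X A n = {c}"
proof -
  let ?S = "mv_spheres X A n"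
  let ?R = "{(x, x'). x \<in> ?S \<and> x' \<in> ?S \<and> mv_homotopic X A n x x'}"
  have R: "?R = ?S \<times> ?S" using homotopic_all[OF assms(1,2,6)] by auto
  have ne: "?S \<noteq> {}" using const_sphere[OF assms] by blast
  have "?S // ?R = {?S}" unfolding R quotient_def using ne by auto
  then show ?thesis unfolding mv_homotopy_group_def by blast
qed

end
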